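(* Let $d\ge1$, $D>0$, $\sigma\ge0$, $\alpha\in[0,1)$. Let $w^*\in\mathbb{R}^d$ with $\|w^*\|\le D$, and let $(x,\epsilon,b)$ be mutually independent random variables with $x\in\mathbb{R}^d$, $\|x\|\le1$ a.s., $\mathbb{E}[x]=0$, $\epsilon\in\mathbb{R}$, $|\epsilon|\le\sigma$ a.s., $\mathbb{E}\epsilon=0$, $b\in\mathbb{R}$, $\mathbb{P}(b\ne0)=\alpha$; set $y=\langle w^*,x\rangle+\epsilon+b$. Let $R=6D+\sigma$. Then for every $w\in\mathcal W$, $$F(w)-F(w^* )\le\frac1{1-\alpha}\big(L_R(w)-L_R(w^* )\big).$$
   Context: $\mathcal W=\{w\in\mathbb{R}^d:\|w\|\le D\}$. The Huber loss is $h_R(s)=\frac12s^2$ if $|s|\le R$ and $h_R(s)=R(|s|-\frac12R)$ otherwise. $L_R(w)=\mathbb{E}_{x,\epsilon,b}[h_R(\langle w,x\rangle-y)]$ is the expected Huber loss under the contaminated distribution, and $F(w)=\mathbb{E}_{x,\epsilon}\big[\tfrac12(\langle w,x\rangle-\langle w^*,x\rangle-\epsilon)^2\big]$ is the expected squared loss on uncorrupted data. *)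

theory Defs
  imports "HOL-Probability.Probability"
begin

definition huber :: "real \<Rightarrow> real \<Rightarrow> real" where
  "huber R s = (if \<bar>s\<bar> \<le> R then s\<^sup>2 / 2 else R * (\<bar>s\<bar> - R / 2))"

definition huber_risk ::
  "'a measure \<Rightarrow> ('a \<Rightarrow> 'd::euclidean_space) \<Rightarrow> ('a \<Rightarrow> real) \<Rightarrow> ('a \<Rightarrow> real)
     \<Rightarrow> 'd \<Rightarrow> real \<Rightarrow> 'd \<Rightarrow> real" where
  "huber_risk M X eps b wstar R w =
     (\<integral>\<omega>. huber R (w \<bullet> X \<omega> - (wstar \<bullet> X \<omega> + eps \<omega> + b \<omega>)) \<partial>M)"

definition sq_risk ::
  "'a measure \<Rightarrow> ('a \<Rightarrow> 'd::euclidean_space) \<Rightarrow> ('a \<Rightarrow> real) \<Rightarrow> 'd \<Rightarrow> 'd \<Rightarrow> real" where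
  "sq_risk M X eps wstar w =
     (\<integral>\<omega>. (w \<bullet> X \<omega> - wstar \<bullet> X \<omega> - eps \<omega>)\<^sup>2 / 2 \<partial>M)"

end

theory Submission
  imports Defs
begin


lemma Int_stable_vimage: "Int_stable {f -` A \<inter> space M | A. A \<in> sets (N::'b measure)}"
  unfolding Int_stable_def
proof clarify
  fix A B assume "A \<in> sets N" "B \<in> sets N"
  then show "\<exists>C. f -` A \<inter> space M \<inter> (f -` B \<inter> space M) = f -` C \<inter> space M \<and> C \<in> sets N"
    by (intro exI[of _ "A \<inter> B"]) auto
qed

lemma indep_pair:
  fixes X :: "'a \<Rightarrow> 'd::euclidean_space" and eps b :: "'a \<Rightarrow> real"
    and f :: "'d \<Rightarrow> real" and g :: "real \<times> real \<Rightarrow> real"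
  assumes P: "prob_space M"
    and mX: "X \<in> borel_measurable M" and me: "eps \<in> borel_measurable M" and mb: "b \<in> borel_measurable M"
    and ind: "prob_space.indep_sets M
           (\<lambda>i::nat. if i = 0 then {X -` A \<inter> space M | A. A \<in> sets borel}
                      else if i = 1 then {eps -` A \<inter> space M | A. A \<in> sets borel}
                      else {b -` A \<inter> space M | A. A \<in> sets borel}) {0, 1, 2}"
    and mf: "f \<in> borel_measurable borel" and mg: "g \<in> borel_measurable borel"
  shows "prob_space.indep_var M borel (\<lambda>\<omega>. f (X \<omega>)) borel (\<lambda>\<omega>. g (eps \<omega>, b \<omega>))"
proof -
  interpret prob_space M by (rule P)
  define E where "E = (\<lambda>i::nat. if i = 0 then {X -` A \<inter> space M | A. A \<in> sets borel}
                      else if i = 1 then {eps -` A \<inter> space M | A. A \<in> sets borel}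
                      else {b -` A \<inter> space M | A. A \<in> sets borel})"
  define I where "I = (\<lambda>j::nat. if j = 0 then {0::nat} else {1,2})"
  have U: "(\<Union>j\<in>{0,1}. I j) = {0,1,2}" by (auto simp: I_def)
  have col: "indep_sets (\<lambda>j. sigma_sets (space M) (\<Union>i\<in>I j. E i)) {0,1}"
  proof (rule indep_sets_collect_sigma)
    show "indep_sets E (\<Union>j\<in>{0,1}. I j)" using ind unfolding U E_def .
    show "Int_stable (E i)" for i unfolding E_def by (auto intro: Int_stable_vimage)
    show "disjoint_family_on I {0,1}" by (auto simp: disjoint_family_on_def I_def)
  qed
  have Esub: "E i \<subseteq> Pow (space M)" for i unfolding E_def by auto
  define N where "N = sigma (space M) (E 1 \<union> E 2)"
  have sN: "sets N = sigma_sets (space M) (E 1 \<union> E 2)"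
    unfolding N_def using Esub by (intro sets_measure_of) auto
  have spN: "space N = space M" unfolding N_def using Esub by (intro space_measure_of) auto
  have eN: "eps \<in> measurable N borel"
    unfolding measurable_def using spN sN by (auto simp: E_def)
  have bN: "b \<in> measurable N borel"
    unfolding measurable_def using spN sN by (auto simp: E_def)
  have pN: "(\<lambda>\<omega>. (eps \<omega>, b \<omega>)) \<in> measurable N borel"
    using measurable_Pair[OF eN bN] by (simp add: borel_prod)
  have gN: "(\<lambda>\<omega>. g (eps \<omega>, b \<omega>)) \<in> measurable N borel"
    using measurable_comp[OF pN mg] by (simp add: comp_def)
  define N0 where "N0 = sigma (space M) (E 0)"
  have sN0: "sets N0 = sigma_sets (space M) (E 0)"
    unfolding N0_def using Esub by (intro sets_measure_of) auto
  have spN0: "space N0 = space M" unfolding N0_def using Esub by (intro space_measure_of) auto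
  have xN0: "X \<in> measurable N0 borel"
    unfolding measurable_def using spN0 sN0 by (auto simp: E_def)
  have fN0: "(\<lambda>\<omega>. f (X \<omega>)) \<in> measurable N0 borel"
    using measurable_comp[OF xN0 mf] by (simp add: comp_def)
  have pM: "(\<lambda>\<omega>. (eps \<omega>, b \<omega>)) \<in> borel_measurable M"
    using measurable_Pair[OF me mb] by (simp add: borel_prod)
  have sub1: "sigma_sets (space M) {(\<lambda>\<omega>. g (eps \<omega>, b \<omega>)) -` A \<inter> space M | A. A \<in> sets borel}
      \<subseteq> sigma_sets (space M) (\<Union>i\<in>I 1. E i)"
  proof (rule sigma_sets_mono)
    show "{(\<lambda>\<omega>. g (eps \<omega>, b \<omega>)) -` A \<inter> space M | A. A \<in> sets borel}
      \<subseteq> sigma_sets (space M) (\<Union>i\<in>I 1. E i)"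
    proof clarify
      fix A :: "real set" assume "A \<in> sets borel"
      then have "(\<lambda>\<omega>. g (eps \<omega>, b \<omega>)) -` A \<inter> space N \<in> sets N" using gN
        by (rule measurable_sets[rotated])
      then show "(\<lambda>\<omega>. g (eps \<omega>, b \<omega>)) -` A \<inter> space M \<in> sigma_sets (space M) (\<Union>i\<in>I 1. E i)"
        using sN spN by (simp add: I_def)
    qed
  qed
  have sub0: "sigma_sets (space M) {(\<lambda>\<omega>. f (X \<omega>)) -` A \<inter> space M | A. A \<in> sets borel}
      \<subseteq> sigma_sets (space M) (\<Union>i\<in>I 0. E i)"
  proof (rule sigma_sets_mono)
    show "{(\<lambda>\<omega>. f (X \<omega>)) -` A \<inter> space M | A. A \<in> sets borel}
      \<subseteq> sigma_sets (space M) (\<Union>i\<in>I 0. E i)"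
    proof clarify
      fix A :: "real set" assume "A \<in> sets borel"
      then have "(\<lambda>\<omega>. f (X \<omega>)) -` A \<inter> space N0 \<in> sets N0" using fN0
        by (rule measurable_sets[rotated])
      then show "(\<lambda>\<omega>. f (X \<omega>)) -` A \<inter> space M \<in> sigma_sets (space M) (\<Union>i\<in>I 0. E i)"
        using sN0 spN0 by (simp add: I_def)
    qed
  qed
  show ?thesis
    unfolding indep_var_eq
  proof (intro conjI)
    show "random_variable borel (\<lambda>\<omega>. f (X \<omega>))" using mX mf by measurable
    show "random_variable borel (\<lambda>\<omega>. g (eps \<omega>, b \<omega>))" using pM mg by measurable
    show "indep_set (sigma_sets (space M) {(\<lambda>\<omega>. f (X \<omega>)) -` A \<inter> space M |A. A \<in> sets borel})
     (sigma_sets (space M) {(\<lambda>\<omega>. g (eps \<omega>, b \<omega>)) -` A \<inter> space M |A. A \<in> sets borel})"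
    proof (rule indep_setI)
      show "sigma_sets (space M) {(\<lambda>\<omega>. f (X \<omega>)) -` A \<inter> space M |A. A \<in> sets borel} \<subseteq> events"
        using col sub0 unfolding indep_sets_def by blast
      show "sigma_sets (space M) {(\<lambda>\<omega>. g (eps \<omega>, b \<omega>)) -` A \<inter> space M |A. A \<in> sets borel} \<subseteq> events"
        using col sub1 unfolding indep_sets_def by blast
      fix a c assume a: "a \<in> sigma_sets (space M) {(\<lambda>\<omega>. f (X \<omega>)) -` A \<inter> space M |A. A \<in> sets borel}"
        and c: "c \<in> sigma_sets (space M) {(\<lambda>\<omega>. g (eps \<omega>, b \<omega>)) -` A \<inter> space M |A. A \<in> sets borel}"
      have "prob (\<Inter>j\<in>{0,1::nat}. (if j = 0 then a else c)) = (\<Prod>j\<in>{0,1::nat}. prob (if j = 0 then a else c))"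
        by (rule indep_setsD[OF col]) (use a c sub0 sub1 in auto)
      then show "prob (a \<inter> c) = prob a * prob c" by (simp add: Int_commute)
    qed
  qed
qed



definition psi :: "real \<Rightarrow> real \<Rightarrow> real" where
  "psi R s = max (-R) (min R s)"

lemma huber_convex:
  assumes R: "R \<ge> 0"
  shows "huber R t \<ge> huber R u + psi R u * (t - u)"
proof (cases "\<bar>u\<bar> \<le> R")
  case True
  then have pu: "psi R u = u" by (auto simp: psi_def)
  show ?thesis
  proof (cases "\<bar>t\<bar> \<le> R")
    case True
    have "0 \<le> (t - u)\<^sup>2 / 2" by simp
    then show ?thesis using True \<open>\<bar>u\<bar> \<le> R\<close> pu by (simp add: huber_def power2_eq_square algebra_simps)
  next
    case False
    have "(\<bar>t\<bar> - R) * (R - \<bar>u\<bar>) \<ge> 0" using False True by simp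
    moreover have "0 \<le> (R - \<bar>u\<bar>)\<^sup>2" by simp
    moreover have "u * t \<le> \<bar>u\<bar> * \<bar>t\<bar>" by (metis abs_ge_self abs_mult)
    moreover have "2*(R*(\<bar>t\<bar> - R/2) - (u*t - u\<^sup>2/2)) = 2*((\<bar>t\<bar>-R)*(R-\<bar>u\<bar>)) + (R-\<bar>u\<bar>)\<^sup>2 + 2*(\<bar>u\<bar>*\<bar>t\<bar> - u*t)"
      by (simp add: algebra_simps power2_eq_square abs_mult_self)
    moreover have "huber R t = R*(\<bar>t\<bar> - R/2)" "huber R u = u\<^sup>2/2" using False True by (auto simp: huber_def)
    ultimately show ?thesis using pu by (simp add: algebra_simps power2_eq_square)
  qed
next
  case False
  then have pu: "psi R u = R * sgn u" using R by (auto simp: psi_def sgn_if max_def min_def)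
  have hu: "huber R u = R * (\<bar>u\<bar> - R/2)" using False by (simp add: huber_def)
  have key: "huber R t \<ge> R * sgn u * t - R\<^sup>2/2"
  proof (cases "\<bar>t\<bar> \<le> R")
    case True
    have "0 \<le> (t - R * sgn u)\<^sup>2 / 2" by simp
    moreover have "(sgn u)\<^sup>2 = 1" using False R by (auto simp: sgn_if)
    ultimately show ?thesis using True by (simp add: huber_def power2_eq_square algebra_simps)
  next
    case False
    have "sgn u * t \<le> \<bar>t\<bar>" by (auto simp: sgn_if)
    then show ?thesis using False R by (simp add: huber_def power2_eq_square algebra_simps mult_left_mono)
  qed
  have "psi R u * (t - u) = R * sgn u * t - R * \<bar>u\<bar>" using pu by (simp add: algebra_simps abs_sgn)
  moreover have "huber R u = R * \<bar>u\<bar> - R\<^sup>2/2" by (simp add: hu algebra_simps power2_eq_square)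
  ultimately show ?thesis using key by linarith
qed

lemma huber_key:
  fixes D \<sigma> z e bb :: real
  assumes "D > 0" "\<sigma> \<ge> 0" "\<bar>z\<bar> \<le> 2 * D" "\<bar>e\<bar> \<le> \<sigma>"
  shows "huber (6 * D + \<sigma>) (z - e - bb) - huber (6 * D + \<sigma>) (-(e + bb))
     \<ge> (if bb = 0 then 1 else 0) * z\<^sup>2 / 2 - z * psi (6 * D + \<sigma>) (e + bb)"
proof (cases "bb = 0")
  case True
  let ?R = "6 * D + \<sigma>"
  have "\<bar>z - e\<bar> \<le> ?R" "\<bar>-e\<bar> \<le> ?R" using assms by auto
  moreover have "psi ?R e = e" using assms by (auto simp: psi_def)
  ultimately show ?thesis using True by (simp add: huber_def power2_eq_square algebra_simps)
next
  case False
  let ?R = "6 * D + \<sigma>"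
  have "psi ?R (-(e+bb)) = - psi ?R (e + bb)" unfolding psi_def max_def min_def using assms by auto
  then have "huber ?R (z - e - bb) \<ge> huber ?R (-(e+bb)) + (- psi ?R (e + bb)) * z"
    using huber_convex[where R="?R" and t="z - e - bb" and u="-(e+bb)"] assms by simp
  then show ?thesis using False by (simp add: algebra_simps)
qed

lemma huber_bound:
  assumes "R \<ge> 0" shows "huber R s \<ge> 0" "huber R s \<le> R * \<bar>s\<bar>"
proof -
  show "huber R s \<ge> 0" using assms by (auto simp: huber_def)
  show "huber R s \<le> R * \<bar>s\<bar>"
  proof (cases "\<bar>s\<bar> \<le> R")
    case True
    then have "s\<^sup>2 \<le> R * \<bar>s\<bar>" by (metis abs_ge_zero mult_right_mono power2_eq_square power2_abs)
    moreover have "0 \<le> R * \<bar>s\<bar>" using assms by simp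
    ultimately have "s\<^sup>2 / 2 \<le> R * \<bar>s\<bar>" by linarith
    then show ?thesis using True by (simp add: huber_def)
  next
    case False
    have "R * (\<bar>s\<bar> - R / 2) \<le> R * \<bar>s\<bar>" using assms by (simp add: algebra_simps)
    then show ?thesis using False by (simp add: huber_def)
  qed
qed



theorem lemma2:
  fixes M :: "'a measure"
    and X :: "'a \<Rightarrow> 'd::euclidean_space"
    and eps b :: "'a \<Rightarrow> real"
    and wstar w :: 'd
    and D \<sigma> \<alpha> :: real
  assumes "prob_space M"
    and "D > 0" and "\<sigma> \<ge> 0" and "0 \<le> \<alpha>" and "\<alpha> < 1"
    and "norm wstar \<le> D"
    and "X \<in> borel_measurable M" and "eps \<in> borel_measurable M" and "b \<in> borel_measurable M"
    and "prob_space.indep_sets M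
           (\<lambda>i::nat. if i = 0 then {X -` A \<inter> space M | A. A \<in> sets borel}
                      else if i = 1 then {eps -` A \<inter> space M | A. A \<in> sets borel}
                      else {b -` A \<inter> space M | A. A \<in> sets borel}) {0, 1, 2}"
    and "AE \<omega> in M. norm (X \<omega>) \<le> 1"
    and "(\<integral>\<omega>. X \<omega> \<partial>M) = 0"
    and "AE \<omega> in M. \<bar>eps \<omega>\<bar> \<le> \<sigma>"
    and "(\<integral>\<omega>. eps \<omega> \<partial>M) = 0"
    and "measure M {\<omega> \<in> space M. b \<omega> \<noteq> 0} = \<alpha>"
    and "integrable M b"
    and "norm w \<le> D"
  shows "sq_risk M X eps wstar w - sq_risk M X eps wstar wstar
           \<le> (1 / (1 - \<alpha>)) * (huber_risk M X eps b wstar (6 * D + \<sigma>) w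
                               - huber_risk M X eps b wstar (6 * D + \<sigma>) wstar)"
proof -
  interpret prob_space M by (rule assms(1))
  define R where "R = 6 * D + \<sigma>"
  define v where "v = w - wstar"
  define z where "z = (\<lambda>\<omega>. v \<bullet> X \<omega>)"
  define ind where "ind = (\<lambda>\<omega>. if b \<omega> = 0 then (1::real) else 0)"
  define ps where "ps = (\<lambda>\<omega>. psi R (eps \<omega> + b \<omega>))"
  have R0: "R \<ge> 0" using assms(2,3) by (simp add: R_def)
  have mX: "X \<in> borel_measurable M" by (rule assms(7))
  have me: "eps \<in> borel_measurable M" by (rule assms(8))
  have mb: "b \<in> borel_measurable M" by (rule assms(9))
  have mz: "z \<in> borel_measurable M" unfolding z_def using mX by measurable
  have msnd: "snd \<in> borel_measurable (borel :: (real\<times>real) measure)"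
    using measurable_snd[of "borel::real measure" "borel::real measure"] by (simp add: borel_prod)
  have mfst: "fst \<in> borel_measurable (borel :: (real\<times>real) measure)"
    using measurable_fst[of "borel::real measure" "borel::real measure"] by (simp add: borel_prod)
  have mpsi: "(\<lambda>p::real\<times>real. psi R (fst p + snd p)) \<in> borel_measurable borel"
    unfolding psi_def using mfst msnd by measurable
  have mps: "ps \<in> borel_measurable M" unfolding ps_def psi_def
    using me mb by measurable
  have mind: "ind \<in> borel_measurable M" unfolding ind_def using mb by measurable
  have nv: "norm v \<le> 2 * D" unfolding v_def using assms(6,17) norm_triangle_ineq4[of w wstar] by linarith
  have zb: "AE \<omega> in M. \<bar>z \<omega>\<bar> \<le> 2 * D"
    using assms(11)
  proof eventually_elim
    case (elim \<omega>)
    have "\<bar>z \<omega>\<bar> \<le> norm v * norm (X \<omega>)" unfolding z_def by (rule Cauchy_Schwarz_ineq2)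
    also have "\<dots> \<le> norm v * 1" using elim by (intro mult_left_mono) auto
    finally show ?case using nv by simp
  qed
  have eb: "AE \<omega> in M. \<bar>eps \<omega>\<bar> \<le> \<sigma>" by (rule assms(13))
  have intX: "integrable M X"
    by (rule integrable_const_bound[where B=1]) (use assms(11) mX in auto)
  have iz: "integrable M z"
    by (rule integrable_const_bound[where B="2*D"]) (use zb mz in auto)
  have Ez: "integral\<^sup>L M z = 0" unfolding z_def using intX assms(12) by simp
  have ie: "integrable M eps"
    by (rule integrable_const_bound[where B="\<sigma>"]) (use eb me in auto)
  have ib: "integrable M b" by (rule assms(16))
  have ips: "integrable M ps"
    by (rule integrable_const_bound[where B="R"]) (use mps R0 in \<open>auto simp: ps_def psi_def\<close>)
  have iind: "integrable M ind"
    by (rule integrable_const_bound[where B="1"]) (use mind in \<open>auto simp: ind_def\<close>)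
  have z2b: "AE \<omega> in M. (z \<omega>)\<^sup>2 \<le> (2 * D)\<^sup>2"
    using zb by eventually_elim (metis abs_le_square_iff abs_of_nonneg assms(2) less_imp_le mult_nonneg_nonneg zero_le_numeral abs_ge_zero order_trans)
  have iz2: "integrable M (\<lambda>\<omega>. (z \<omega>)\<^sup>2)"
    by (rule integrable_const_bound[where B="(2*D)\<^sup>2"]) (use z2b mz in auto)
  have ize: "integrable M (\<lambda>\<omega>. z \<omega> * eps \<omega>)"
  proof (rule integrable_const_bound[where B="2*D*\<sigma>"])
    show "AE \<omega> in M. norm (z \<omega> * eps \<omega>) \<le> 2*D*\<sigma>"
      using zb eb by eventually_elim (simp add: abs_mult mult_mono')
  qed (use mz me in auto)
  have Ind: "indep_var borel (\<lambda>\<omega>. f (X \<omega>)) borel (\<lambda>\<omega>. g (eps \<omega>, b \<omega>))"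
    if "f \<in> borel_measurable borel" "g \<in> borel_measurable borel" for f :: "'d \<Rightarrow> real" and g
    by (rule indep_pair[OF assms(1) mX me mb assms(10) that])
  have Eze: "(\<integral>\<omega>. z \<omega> * eps \<omega> \<partial>M) = 0"
  proof -
    have "indep_var borel z borel eps"
      using Ind[of "\<lambda>x. v \<bullet> x" fst, OF _ mfst] unfolding z_def by simp
    then show ?thesis using indep_var_lebesgue_integral[OF _ iz ie] Ez by simp
  qed
  have Ezps: "(\<integral>\<omega>. z \<omega> * ps \<omega> \<partial>M) = 0"
  proof -
    have "indep_var borel z borel ps"
      using Ind[of "\<lambda>x. v \<bullet> x" "\<lambda>p. psi R (fst p + snd p)", OF _ mpsi] unfolding z_def ps_def by simp
    then show ?thesis using indep_var_lebesgue_integral[OF _ iz ips] Ez by simp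
  qed
  have izps: "integrable M (\<lambda>\<omega>. z \<omega> * ps \<omega>)"
  proof -
    have "indep_var borel z borel ps"
      using Ind[of "\<lambda>x. v \<bullet> x" "\<lambda>p. psi R (fst p + snd p)", OF _ mpsi] unfolding z_def ps_def by simp
    then show ?thesis using indep_var_integrable[OF _ iz ips] by simp
  qed
  have Pind: "integral\<^sup>L M ind = 1 - \<alpha>"
  proof -
    have "integral\<^sup>L M ind = (\<integral>\<omega>. indicator {\<omega> \<in> space M. b \<omega> = 0} \<omega> \<partial>M)"
      by (rule Bochner_Integration.integral_cong) (auto simp: ind_def)
    also have "\<dots> = prob {\<omega> \<in> space M. b \<omega> = 0}"
      by (simp add: Int_absorb2)
    also have "{\<omega> \<in> space M. b \<omega> = 0} = space M - {\<omega> \<in> space M. b \<omega> \<noteq> 0}" by auto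
    also have "prob \<dots> = 1 - prob {\<omega> \<in> space M. b \<omega> \<noteq> 0}"
      by (rule prob_compl) (use mb in measurable)
    finally show ?thesis using assms(15) by simp
  qed
  have Ez2ind: "(\<integral>\<omega>. (z \<omega>)\<^sup>2 * ind \<omega> \<partial>M) = (1 - \<alpha>) * (\<integral>\<omega>. (z \<omega>)\<^sup>2 \<partial>M)"
  proof -
    have mi: "(\<lambda>p::real\<times>real. if snd p = 0 then (1::real) else 0) \<in> borel_measurable borel" using msnd by measurable
    have "indep_var borel (\<lambda>\<omega>. (z \<omega>)\<^sup>2) borel ind"
      using Ind[of "\<lambda>x. (v \<bullet> x)\<^sup>2", OF _ mi] unfolding z_def ind_def by simp
    then show ?thesis using indep_var_lebesgue_integral[OF _ iz2 iind] Pind by simp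
  qed
  have iz2ind: "integrable M (\<lambda>\<omega>. (z \<omega>)\<^sup>2 * ind \<omega>)"
  proof -
    have mi: "(\<lambda>p::real\<times>real. if snd p = 0 then (1::real) else 0) \<in> borel_measurable borel" using msnd by measurable
    have "indep_var borel (\<lambda>\<omega>. (z \<omega>)\<^sup>2) borel ind"
      using Ind[of "\<lambda>x. (v \<bullet> x)\<^sup>2", OF _ mi] unfolding z_def ind_def by simp
    then show ?thesis using indep_var_integrable[OF _ iz2 iind] by simp
  qed
  define Q where "Q = (\<integral>\<omega>. (z \<omega>)\<^sup>2 \<partial>M)"
  have SQ: "sq_risk M X eps wstar w - sq_risk M X eps wstar wstar = Q / 2"
  proof -
    have "sq_risk M X eps wstar w - sq_risk M X eps wstar wstar
        = (\<integral>\<omega>. (z \<omega> - eps \<omega>)\<^sup>2 / 2 - (eps \<omega>)\<^sup>2 / 2 \<partial>M)"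
    proof -
      have e2b: "AE \<omega> in M. (eps \<omega>)\<^sup>2 \<le> \<sigma>\<^sup>2"
        using eb by eventually_elim (metis abs_le_square_iff abs_of_nonneg abs_ge_zero order_trans)
      have ie2: "integrable M (\<lambda>\<omega>. (eps \<omega>)\<^sup>2 / 2)"
        by (rule integrable_const_bound[where B="\<sigma>\<^sup>2/2"]) (use e2b me in \<open>auto elim!: eventually_mono\<close>)
      have "(\<lambda>\<omega>. (z \<omega> - eps \<omega>)\<^sup>2 / 2) = (\<lambda>\<omega>. (z \<omega>)\<^sup>2 / 2 - z \<omega> * eps \<omega> + (eps \<omega>)\<^sup>2 / 2)"
        by (simp add: power2_diff field_simps)
      then have i1: "integrable M (\<lambda>\<omega>. (z \<omega> - eps \<omega>)\<^sup>2 / 2)"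
        using iz2 ize ie2 by simp
      have "sq_risk M X eps wstar w = (\<integral>\<omega>. (z \<omega> - eps \<omega>)\<^sup>2 / 2 \<partial>M)"
        unfolding sq_risk_def z_def v_def by (simp add: inner_diff_left)
      moreover have "sq_risk M X eps wstar wstar = (\<integral>\<omega>. (eps \<omega>)\<^sup>2 / 2 \<partial>M)"
        unfolding sq_risk_def by simp
      ultimately show ?thesis using Bochner_Integration.integral_diff[OF i1 ie2] by simp
    qed
    also have "\<dots> = (\<integral>\<omega>. (z \<omega>)\<^sup>2 / 2 - z \<omega> * eps \<omega> \<partial>M)"
      by (rule Bochner_Integration.integral_cong) (auto simp: power2_diff field_simps)
    also have "\<dots> = Q / 2 - 0"
      using Bochner_Integration.integral_diff[OF _ ize, of "\<lambda>\<omega>. (z \<omega>)\<^sup>2 / 2"] iz2 Eze by (simp add: Q_def)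
    finally show ?thesis by simp
  qed
  define H1 where "H1 = (\<lambda>\<omega>. huber R (z \<omega> - eps \<omega> - b \<omega>))"
  define H0 where "H0 = (\<lambda>\<omega>. huber R (- (eps \<omega> + b \<omega>)))"
  have mH: "(\<lambda>\<omega>. huber R (f \<omega>)) \<in> borel_measurable M" if "f \<in> borel_measurable M" for f
    unfolding huber_def using that by measurable
  have iH: "integrable M (\<lambda>\<omega>. huber R (f \<omega>))"
    if mf: "f \<in> borel_measurable M" and fb: "\<And>\<omega>. \<bar>f \<omega>\<bar> \<le> \<bar>z \<omega>\<bar> + \<bar>eps \<omega>\<bar> + \<bar>b \<omega>\<bar>" for f
  proof (rule Bochner_Integration.integrable_bound)
    show "integrable M (\<lambda>\<omega>. R * (\<bar>z \<omega>\<bar> + \<bar>eps \<omega>\<bar> + \<bar>b \<omega>\<bar>))"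
      using iz ie ib by (intro integrable_mult_right Bochner_Integration.integrable_add integrable_abs)
    show "(\<lambda>\<omega>. huber R (f \<omega>)) \<in> borel_measurable M" by (rule mH[OF mf])
    show "AE \<omega> in M. norm (huber R (f \<omega>)) \<le> norm (R * (\<bar>z \<omega>\<bar> + \<bar>eps \<omega>\<bar> + \<bar>b \<omega>\<bar>))"
    proof (intro AE_I2)
      fix \<omega>
      have "huber R (f \<omega>) \<le> R * \<bar>f \<omega>\<bar>" by (rule huber_bound(2)[OF R0])
      also have "\<dots> \<le> R * (\<bar>z \<omega>\<bar> + \<bar>eps \<omega>\<bar> + \<bar>b \<omega>\<bar>)" using fb R0 by (intro mult_left_mono) auto
      finally show "norm (huber R (f \<omega>)) \<le> norm (R * (\<bar>z \<omega>\<bar> + \<bar>eps \<omega>\<bar> + \<bar>b \<omega>\<bar>))"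
        using huber_bound(1)[OF R0, of "f \<omega>"] R0 by simp
    qed
  qed
  have iH1: "integrable M H1" unfolding H1_def
    by (rule iH) (use mz me mb in auto)
  have iH0: "integrable M H0" unfolding H0_def
    by (rule iH) (use me mb in auto)
  have HD: "huber_risk M X eps b wstar R w - huber_risk M X eps b wstar R wstar
      = (\<integral>\<omega>. H1 \<omega> - H0 \<omega> \<partial>M)"
  proof -
    have "huber_risk M X eps b wstar R w = integral\<^sup>L M H1"
      unfolding huber_risk_def H1_def z_def v_def
      by (rule Bochner_Integration.integral_cong) (auto simp: inner_diff_left algebra_simps)
    moreover have "huber_risk M X eps b wstar R wstar = integral\<^sup>L M H0"
      unfolding huber_risk_def H0_def
      by (rule Bochner_Integration.integral_cong) (auto simp: algebra_simps)
    ultimately show ?thesis using Bochner_Integration.integral_diff[OF iH1 iH0] by simp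
  qed
  have LOW: "(1 - \<alpha>) * Q / 2 \<le> (\<integral>\<omega>. H1 \<omega> - H0 \<omega> \<partial>M)"
  proof -
    have "(1 - \<alpha>) * Q / 2 = (\<integral>\<omega>. (z \<omega>)\<^sup>2 * ind \<omega> / 2 - z \<omega> * ps \<omega> \<partial>M)"
      using Bochner_Integration.integral_diff[OF integrable_divide[OF iz2ind, of 2] izps] Ez2ind Ezps
      by (simp add: Q_def)
    also have "\<dots> \<le> (\<integral>\<omega>. H1 \<omega> - H0 \<omega> \<partial>M)"
    proof (rule integral_mono_AE)
      show "integrable M (\<lambda>\<omega>. (z \<omega>)\<^sup>2 * ind \<omega> / 2 - z \<omega> * ps \<omega>)"
        using iz2ind izps by auto
      show "integrable M (\<lambda>\<omega>. H1 \<omega> - H0 \<omega>)" using iH1 iH0 by auto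
      show "AE \<omega> in M. (z \<omega>)\<^sup>2 * ind \<omega> / 2 - z \<omega> * ps \<omega> \<le> H1 \<omega> - H0 \<omega>"
        using zb eb
      proof eventually_elim
        case (elim \<omega>)
        from huber_key[OF assms(2,3) elim, of "b \<omega>"]
        show ?case by (cases "b \<omega> = 0") (simp_all add: H1_def H0_def ind_def ps_def R_def)
      qed
    qed
    finally show ?thesis .
  qed
  have a1: "0 < 1 - \<alpha>" using assms(5) by simp
  have fin: "Q / 2 \<le> (1 / (1 - \<alpha>)) * (\<integral>\<omega>. H1 \<omega> - H0 \<omega> \<partial>M)"
    using LOW a1 by (simp add: field_simps)
  show ?thesis unfolding R_def[symmetric] SQ HD by (rule fin)
qed

end
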